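(* Let $q\ge2$ and $\mu,R>0$. There is no sequence of $l_i$-shot ID codes for $\Pi^q_{n_i}$, $i=1,2,\dots$, with $n_i\to\infty$, $l_i/n_i\to0$, $M_i\ge 2^{R n_i^{l_i(q-1)}}$ messages, and type-I and type-II error probabilities satisfying $\lambda_{1,i}<n_i^{-l_i\mu}$ and $\lambda_{2,i}<n_i^{-l_i\mu}$ for all $i$.
   Context: Fix an integer $q\ge 2$ and let $\mathcal A_q=\{1,\dots,q\}$. For $n\ge1$ and $\sigma\in S_n$ (the symmetric group on $\{1,\dots,n\}$), $\sigma\mathbf x=(x_{\sigma^{-1}(1)},\dots,x_{\sigma^{-1}(n)})$ for $\mathbf x\in\mathcal A_q^n$. The $n$-block $q$-ary uniform permutation channel $\Pi^q_n$ has input/output alphabet $\mathcal A_q^n$ and $\Pi^q_n(\mathbf y\mid\mathbf x)=\frac1{n!}\sum_{\sigma\in S_n}\mathbf 1\{\mathbf y=\sigma\mathbf x\}$. Using it $l$ times (independently on each block) gives the channel $W^{(l)}$ on $(\mathcal A_q^n)^l$ with $W^{(l)}(\mathbf y^{(1)},\dots,\mathbf y^{(l)}\mid \mathbf x^{(1)},\dots,\mathbf x^{(l)})=\prod_{s=1}^l\Pi^q_n(\mathbf y^{(s)}\mid\mathbf x^{(s)})$. An $l$-shot ID code with $M$ messages for $\Pi^q_n$ (an "$(n,l,M,\lambda_1,\lambda_2)$ ID code") is a family $\{(Q_i,\mathcal D_i)\}_{i=1}^M$ with $Q_i$ a probability distribution on $(\mathcal A_q^n)^l$ and $\mathcal D_i\subseteq(\mathcal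 A_q^n)^l$; its error probabilities are $\lambda_{i\to j}=\sum_{\underline{\mathbf x}}Q_i(\underline{\mathbf x})\sum_{\underline{\mathbf y}\in\mathcal D_j}W^{(l)}(\underline{\mathbf y}\mid\underline{\mathbf x})$ ($i\neq j$), $\lambda_{i\not\to i}=\sum_{\underline{\mathbf x}}Q_i(\underline{\mathbf x})\sum_{\underline{\mathbf y}\notin\mathcal D_i}W^{(l)}(\underline{\mathbf y}\mid\underline{\mathbf x})$, type-I error probability $\lambda_1=\max_i\lambda_{i\not\to i}$, type-II error probability $\lambda_2=\max_{i\ne j}\lambda_{i\to j}$. *)

theory Defs
  imports "HOL-Analysis.Analysis" "HOL-Combinatorics.Permutations"
begin

text \<open>Words of length n over the alphabet {1..q}, represented as lists
  (position k of the list is coordinate k+1 of the word).\<close>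
definition words :: "nat \<Rightarrow> nat \<Rightarrow> nat list set" where
  "words q n = {x. length x = n \<and> set x \<subseteq> {1..q}}"

definition blocks :: "nat \<Rightarrow> nat \<Rightarrow> nat \<Rightarrow> nat list list set" where
  "blocks q n l = {xs. length xs = l \<and> (\<forall>x\<in>set xs. x \<in> words q n)}"

definition perm_word :: "(nat \<Rightarrow> nat) \<Rightarrow> nat list \<Rightarrow> nat list" where
  "perm_word \<sigma> x = map (\<lambda>k. x ! inv \<sigma> k) [0..<length x]"

definition perm_channel :: "nat \<Rightarrow> nat list \<Rightarrow> nat list \<Rightarrow> real" where
  "perm_channel n y x =
     real (card {\<sigma>. \<sigma> permutes {..<n} \<and> y = perm_word \<sigma> x}) / fact n"

definition prod_channel :: "nat \<Rightarrow> nat \<Rightarrow> nat list list \<Rightarrow> nat list list \<Rightarrow> real" where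
  "prod_channel n l ys xs = (\<Prod>s<l. perm_channel n (ys ! s) (xs ! s))"

definition is_ID_code ::
  "nat \<Rightarrow> nat \<Rightarrow> nat \<Rightarrow> nat \<Rightarrow> (nat \<Rightarrow> nat list list \<Rightarrow> real) \<Rightarrow> (nat \<Rightarrow> nat list list set) \<Rightarrow> bool" where
  "is_ID_code q n l M Q D \<longleftrightarrow> n \<ge> 1 \<and> l \<ge> 1 \<and> M \<ge> 1 \<and>
     (\<forall>i<M. (\<forall>xs\<in>blocks q n l. Q i xs \<ge> 0) \<and> (\<Sum>xs\<in>blocks q n l. Q i xs) = 1
            \<and> D i \<subseteq> blocks q n l)"

definition err_to ::
  "nat \<Rightarrow> nat \<Rightarrow> nat \<Rightarrow> (nat \<Rightarrow> nat list list \<Rightarrow> real) \<Rightarrow> (nat \<Rightarrow> nat list list set) \<Rightarrow> nat \<Rightarrow> nat \<Rightarrow> real" where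
  "err_to q n l Q D i j =
     (\<Sum>xs\<in>blocks q n l. Q i xs * (\<Sum>ys\<in>D j. prod_channel n l ys xs))"

definition err_not_to ::
  "nat \<Rightarrow> nat \<Rightarrow> nat \<Rightarrow> (nat \<Rightarrow> nat list list \<Rightarrow> real) \<Rightarrow> (nat \<Rightarrow> nat list list set) \<Rightarrow> nat \<Rightarrow> real" where
  "err_not_to q n l Q D i =
     (\<Sum>xs\<in>blocks q n l. Q i xs * (\<Sum>ys\<in>blocks q n l - D i. prod_channel n l ys xs))"

definition type1_err ::
  "nat \<Rightarrow> nat \<Rightarrow> nat \<Rightarrow> nat \<Rightarrow> (nat \<Rightarrow> nat list list \<Rightarrow> real) \<Rightarrow> (nat \<Rightarrow> nat list list set) \<Rightarrow> real" where
  "type1_err q n l M Q D = Max {err_not_to q n l Q D i | i. i < M}"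

definition type2_err ::
  "nat \<Rightarrow> nat \<Rightarrow> nat \<Rightarrow> nat \<Rightarrow> (nat \<Rightarrow> nat list list \<Rightarrow> real) \<Rightarrow> (nat \<Rightarrow> nat list list set) \<Rightarrow> real" where
  "type2_err q n l M Q D = Max {err_to q n l Q D i j | i j. i < M \<and> j < M \<and> i \<noteq> j}"

end

theory Submission
  imports Defs "HOL-Real_Asymp.Real_Asymp"
begin


lemma perm_word_eq: "perm_word \<sigma> x = permute_list (inv \<sigma>) x"
  by (simp add: perm_word_def permute_list_def)

lemma finite_words: "finite (words q n)"
proof -
  have "words q n = {x. set x \<subseteq> {1..q} \<and> length x = n}" by (auto simp: words_def)
  thus ?thesis using finite_lists_length_eq[of "{1..q}" n] by simp
qed

lemma perm_word_in_words:
  assumes "\<sigma> permutes {..<n}" "x \<in> words q n"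
  shows "perm_word \<sigma> x \<in> words q n"
proof -
  have "inv \<sigma> permutes {..<length x}" using assms by (simp add: permutes_inv words_def)
  thus ?thesis using assms(2) by (simp add: perm_word_eq words_def)
qed

lemma perm_channel_nonneg: "perm_channel n y x \<ge> 0"
  by (simp add: perm_channel_def)

lemma perm_channel_sum:
  assumes "x \<in> words q n"
  shows "(\<Sum>y\<in>words q n. perm_channel n y x) = 1"
proof -
  let ?P = "{\<sigma>. \<sigma> permutes {..<n}}"
  have finP: "finite ?P" by (simp add: finite_permutations)
  have "(\<Sum>y\<in>words q n. card {\<sigma>. \<sigma> permutes {..<n} \<and> y = perm_word \<sigma> x})
        = (\<Sum>y\<in>words q n. card {\<sigma>. \<sigma> \<in> ?P \<and> perm_word \<sigma> x = y})"
    by (intro sum.cong refl arg_cong[where f=card]) blast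
  also have "\<dots> = (\<Sum>y\<in>words q n. \<Sum>\<sigma>\<in>{\<sigma>. \<sigma> \<in> ?P \<and> perm_word \<sigma> x = y}. 1)" by simp
  also have "\<dots> = (\<Sum>\<sigma>\<in>?P. 1)"
    apply (rule sum.group[OF finP finite_words]) using perm_word_in_words assms by blast
  also have "\<dots> = fact n" using card_permutations[of "{..<n}" n] by simp
  finally have h: "(\<Sum>y\<in>words q n. card {\<sigma>. \<sigma> permutes {..<n} \<and> y = perm_word \<sigma> x}) = fact n" .
  have "(\<Sum>y\<in>words q n. real (card {\<sigma>. \<sigma> permutes {..<n} \<and> y = perm_word \<sigma> x})) = fact n"
    unfolding of_nat_sum[symmetric] h by simp
  thus ?thesis unfolding perm_channel_def sum_divide_distrib[symmetric] by simp
qed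




lemma pl_inv1:
  assumes "p permutes {..<length z}"
  shows "permute_list (inv p) (permute_list p z) = z"
proof -
  have "inv p permutes {..<length z}" using assms permutes_inv by blast
  hence "permute_list (p \<circ> inv p) z = permute_list (inv p) (permute_list p z)"
    by (rule permute_list_compose)
  moreover have "p \<circ> inv p = id" using assms permutes_inv_o(1) by blast
  ultimately show ?thesis by simp
qed

lemma pl_inv2:
  assumes "p permutes {..<length z}"
  shows "permute_list p (permute_list (inv p) z) = z"
proof -
  have "permute_list (inv p \<circ> p) z = permute_list p (permute_list (inv p) z)"
    using assms by (rule permute_list_compose)
  moreover have "inv p \<circ> p = id" using assms permutes_inv_o(2) by blast
  ultimately show ?thesis by simp
qed

lemma perm_eqv:
  assumes p: "p permutes {..<n}" and s: "\<sigma> permutes {..<n}"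
    and lx: "length x = n" and ly: "length y = n"
  shows "permute_list p y = perm_word \<sigma> x \<longleftrightarrow> y = perm_word (p \<circ> \<sigma>) x"
proof -
  have ip: "inv p permutes {..<n}" using p permutes_inv by blast
  have "inv (p \<circ> \<sigma>) = inv \<sigma> \<circ> inv p"
    using p s by (simp add: o_inv_distrib permutes_bij)
  hence e: "perm_word (p \<circ> \<sigma>) x = permute_list (inv p) (perm_word \<sigma> x)"
    using permute_list_compose[of "inv p" x "inv \<sigma>"] ip lx by (simp add: perm_word_eq)
  have lz: "length (perm_word \<sigma> x) = n" using lx by (simp add: perm_word_eq)
  show ?thesis
  proof
    assume "permute_list p y = perm_word \<sigma> x"
    hence "permute_list (inv p) (permute_list p y) = perm_word (p \<circ> \<sigma>) x" using e by simp
    thus "y = perm_word (p \<circ> \<sigma>) x" using pl_inv1[of p y] p ly by simp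
  next
    assume "y = perm_word (p \<circ> \<sigma>) x"
    thus "permute_list p y = perm_word \<sigma> x" using e pl_inv2[of p "perm_word \<sigma> x"] p lz by simp
  qed
qed

lemma perm_channel_perm:
  assumes p: "p permutes {..<n}" and y: "length y = n" and x: "length x = n"
  shows "perm_channel n (permute_list p y) x = perm_channel n y x"
proof -
  let ?L = "{\<sigma>. \<sigma> permutes {..<n} \<and> permute_list p y = perm_word \<sigma> x}"
  let ?R = "{\<sigma>. \<sigma> permutes {..<n} \<and> y = perm_word \<sigma> x}"
  have L: "?L = {\<sigma>. \<sigma> permutes {..<n} \<and> y = perm_word (p \<circ> \<sigma>) x}"
    by (rule Collect_cong) (simp add: perm_eqv[OF p _ x y] cong: conj_cong)
  have img: "?R = (\<lambda>\<sigma>. p \<circ> \<sigma>) ` ?L"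
  proof
    show "(\<lambda>\<sigma>. p \<circ> \<sigma>) ` ?L \<subseteq> ?R" unfolding L using p permutes_compose by blast
    show "?R \<subseteq> (\<lambda>\<sigma>. p \<circ> \<sigma>) ` ?L"
    proof
      fix \<tau> assume t: "\<tau> \<in> ?R"
      have "inv p \<circ> \<tau> permutes {..<n}" using t p permutes_inv permutes_compose by blast
      moreover have eq: "p \<circ> (inv p \<circ> \<tau>) = \<tau>" by (simp add: comp_assoc[symmetric] permutes_inv_o(1)[OF p])
      ultimately have "inv p \<circ> \<tau> \<in> {\<sigma>. \<sigma> permutes {..<n} \<and> y = perm_word (p \<circ> \<sigma>) x}"
        using t eq by simp
      hence "p \<circ> (inv p \<circ> \<tau>) \<in> (\<lambda>\<sigma>. p \<circ> \<sigma>) ` ?L" unfolding L by (rule imageI)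
      thus "\<tau> \<in> (\<lambda>\<sigma>. p \<circ> \<sigma>) ` ?L" unfolding eq .
    qed
  qed
  have inj: "inj_on (\<lambda>\<sigma>. p \<circ> \<sigma>) ?L"
  proof (rule inj_onI)
    fix a b assume "p \<circ> a = p \<circ> b"
    hence "inv p \<circ> (p \<circ> a) = inv p \<circ> (p \<circ> b)" by simp
    thus "a = b" by (simp add: comp_assoc[symmetric] permutes_inv_o(2)[OF p])
  qed
  have "card ?R = card ?L" unfolding img by (rule card_image[OF inj])
  thus ?thesis unfolding perm_channel_def by simp
qed

lemma perm_channel_mset:
  assumes "mset y' = mset y" "length y = n" "length x = n"
  shows "perm_channel n y' x = perm_channel n y x"
proof -
  obtain p where "p permutes {..<length y}" "permute_list p y = y'"
    using mset_eq_permutation[OF assms(1)] by blast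
  thus ?thesis using perm_channel_perm[of p n y x] assms by simp
qed




lemma blocks_bij:
  "bij_betw (\<lambda>g. map g [0..<l]) (PiE {..<l} (\<lambda>_. words q n)) (blocks q n l)"
proof (rule bij_betw_byWitness[where f'="\<lambda>ys. restrict (\<lambda>s. ys ! s) {..<l}"])
  show "\<forall>a\<in>PiE {..<l} (\<lambda>_. words q n). restrict (\<lambda>s. map a [0..<l] ! s) {..<l} = a"
  proof
    fix a assume a: "a \<in> PiE {..<l} (\<lambda>_. words q n)"
    show "restrict (\<lambda>s. map a [0..<l] ! s) {..<l} = a"
    proof (rule ext)
      fix s show "restrict (\<lambda>s. map a [0..<l] ! s) {..<l} s = a s"
        using a by (cases "s < l") (auto simp: PiE_def extensional_def)
    qed
  qed
  show "\<forall>a'\<in>blocks q n l. map (restrict (\<lambda>s. a' ! s) {..<l}) [0..<l] = a'"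
    by (auto simp: blocks_def intro!: nth_equalityI)
  show "(\<lambda>g. map g [0..<l]) ` PiE {..<l} (\<lambda>_. words q n) \<subseteq> blocks q n l"
    by (auto simp: blocks_def PiE_def Pi_def)
  show "(\<lambda>ys. restrict (\<lambda>s. ys ! s) {..<l}) ` blocks q n l \<subseteq> PiE {..<l} (\<lambda>_. words q n)"
    by (auto simp: blocks_def PiE_def Pi_def)
qed

lemma finite_blocks: "finite (blocks q n l)"
proof -
  have "finite (PiE {..<l} (\<lambda>_. words q n))" by (simp add: finite_PiE finite_words)
  thus ?thesis using bij_betw_finite[OF blocks_bij] by blast
qed

lemma prod_channel_nonneg: "prod_channel n l ys xs \<ge> 0"
  unfolding prod_channel_def perm_channel_def by (intro prod_nonneg) simp

lemma prod_channel_sum: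
  assumes xs: "xs \<in> blocks q n l"
  shows "(\<Sum>ys\<in>blocks q n l. prod_channel n l ys xs) = 1"
proof -
  have "(\<Sum>ys\<in>blocks q n l. prod_channel n l ys xs)
      = (\<Sum>g\<in>PiE {..<l} (\<lambda>_. words q n). prod_channel n l (map g [0..<l]) xs)"
    by (rule sum.reindex_bij_betw[OF blocks_bij, symmetric])
  also have "\<dots> = (\<Sum>g\<in>PiE {..<l} (\<lambda>_. words q n). \<Prod>s\<in>{..<l}. perm_channel n (g s) (xs ! s))"
    unfolding prod_channel_def by (intro sum.cong refl prod.cong) auto
  also have "\<dots> = (\<Prod>s\<in>{..<l}. \<Sum>y\<in>words q n. perm_channel n y (xs ! s))"
    by (rule prod_sum_PiE[symmetric]) (auto simp: finite_words)
  also have "\<dots> = (\<Prod>s\<in>{..<l}. 1)"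
  proof (rule prod.cong[OF refl])
    fix s assume "s \<in> {..<l}"
    hence "xs ! s \<in> words q n" using xs by (auto simp: blocks_def)
    thus "(\<Sum>y\<in>words q n. perm_channel n y (xs ! s)) = 1" by (rule perm_channel_sum)
  qed
  finally show ?thesis by simp
qed




lemma card_mset_words:
  assumes q: "q \<ge> 1"
  shows "card (mset ` words q n) \<le> (n+1) ^ (q-1)"
proof -
  define \<phi> where "\<phi> m = restrict (count m) {1..q-1}" for m :: "nat multiset"
  have cnt: "(\<Sum>c\<in>{1..q}. count (mset x) c) = n" if "x \<in> words q n" for x
    using sum_count_set[of x "{1..q}"] that by (simp add: words_def count_mset)
  have inj: "inj_on \<phi> (mset ` words q n)"
  proof (rule inj_onI)
    fix a b assume a: "a \<in> mset ` words q n" and b: "b \<in> mset ` words q n" and e: "\<phi> a = \<phi> b"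
    obtain x where x: "x \<in> words q n" "a = mset x" using a by blast
    obtain y where y: "y \<in> words q n" "b = mset y" using b by blast
    have low: "count a c = count b c" if "c \<in> {1..q-1}" for c
      using fun_cong[OF e, of c] that by (simp add: \<phi>_def)
    have split: "{1..q} = insert q {1..q-1}" using q by auto
    have qn: "q \<notin> {1..q-1}" using q by auto
    have sa: "count a q + (\<Sum>c\<in>{1..q-1}. count a c) = n"
      using cnt[OF x(1)] x(2) split qn by simp
    have sb: "count b q + (\<Sum>c\<in>{1..q-1}. count b c) = n"
      using cnt[OF y(1)] y(2) split qn by simp
    have "(\<Sum>c\<in>{1..q-1}. count a c) = (\<Sum>c\<in>{1..q-1}. count b c)"
      using low by (rule sum.cong[OF refl])
    hence top: "count a q = count b q" using sa sb by linarith
    show "a = b"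
    proof (rule multiset_eqI)
      fix c
      show "count a c = count b c"
      proof (cases "c \<in> {1..q-1}")
        case True thus ?thesis by (rule low)
      next
        case False
        show ?thesis
        proof (cases "c = q")
          case True thus ?thesis using top by simp
        next
          case False
          hence "c \<notin> {1..q}" using \<open>c \<notin> {1..q-1}\<close> by auto
          hence "c \<notin> set x" "c \<notin> set y" using x(1) y(1) by (auto simp: words_def)
          thus ?thesis using x(2) y(2) by (metis count_mset_0_iff set_mset_mset)
        qed
      qed
    qed
  qed
  have sub: "\<phi> ` (mset ` words q n) \<subseteq> PiE {1..q-1} (\<lambda>_. {0..n})"
  proof
    fix f assume "f \<in> \<phi> ` (mset ` words q n)"
    then obtain x where x: "x \<in> words q n" "f = \<phi> (mset x)" by blast
    have "count (mset x) c \<le> n" for c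
      using x(1) count_le_length[of x c] by (simp add: words_def count_mset)
    thus "f \<in> PiE {1..q-1} (\<lambda>_. {0..n})" using x(2) by (auto simp: \<phi>_def)
  qed
  have "card (mset ` words q n) = card (\<phi> ` (mset ` words q n))" using card_image[OF inj] by simp
  also have "\<dots> \<le> card (PiE {1..q-1} (\<lambda>_. {0..n::nat}))"
    by (rule card_mono[OF _ sub]) (simp add: finite_PiE)
  also have "\<dots> = (n+1) ^ (q-1)" by (simp add: card_PiE)
  finally show ?thesis .
qed

lemma card_types:
  assumes q: "q \<ge> 1"
  shows "card ((\<lambda>ys. map mset ys) ` blocks q n l) \<le> (n+1) ^ (l*(q-1))"
proof -
  have fin: "finite (mset ` words q n)" by (simp add: finite_words)
  have "(\<lambda>ys. map mset ys) ` blocks q n l \<subseteq> {ts. set ts \<subseteq> mset ` words q n \<and> length ts = l}"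
    by (auto simp: blocks_def)
  hence "card ((\<lambda>ys. map mset ys) ` blocks q n l) \<le> card {ts. set ts \<subseteq> mset ` words q n \<and> length ts = l}"
    by (rule card_mono[rotated]) (simp add: fin finite_lists_length_eq)
  also have "\<dots> = card (mset ` words q n) ^ l" by (rule card_lists_length_eq[OF fin])
  also have "\<dots> \<le> ((n+1) ^ (q-1)) ^ l" by (rule power_mono[OF card_mset_words[OF q]]) simp
  also have "\<dots> = (n+1) ^ (l*(q-1))" by (simp add: power_mult[symmetric] mult.commute)
  finally show ?thesis .
qed

lemma prod_channel_type:
  assumes ys: "ys \<in> blocks q n l" and ys': "ys' \<in> blocks q n l" and xs: "xs \<in> blocks q n l"
    and t: "map mset ys = map mset ys'"
  shows "prod_channel n l ys xs = prod_channel n l ys' xs"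
  unfolding prod_channel_def
proof (rule prod.cong[OF refl])
  fix s assume s: "s \<in> {..<l}"
  have l: "length ys = l" "length ys' = l" using ys ys' by (auto simp: blocks_def)
  have "mset (ys ! s) = mset (ys' ! s)" using arg_cong[OF t, of "\<lambda>z. z ! s"] s l by simp
  moreover have "length (ys' ! s) = n" "length (xs ! s) = n"
    using ys' xs s l by (auto simp: blocks_def words_def)
  ultimately show "perm_channel n (ys ! s) (xs ! s) = perm_channel n (ys' ! s) (xs ! s)"
    by (rule perm_channel_mset)
qed




lemma core_exists:
  fixes T :: "'a set" and P :: "nat \<Rightarrow> 'a \<Rightarrow> real" and G :: "nat \<Rightarrow> 'a set"
  assumes fin: "finite T"
    and nn: "\<And>i t. i < M \<Longrightarrow> t \<in> T \<Longrightarrow> P i t \<ge> 0"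
    and sum1: "\<And>i. i < M \<Longrightarrow> sum (P i) T = 1"
    and GT: "\<And>i. i < M \<Longrightarrow> G i \<subseteq> T"
    and e1: "\<And>i. i < M \<Longrightarrow> sum (P i) (T - G i) \<le> \<delta>"
    and e2: "\<And>i j. i < M \<Longrightarrow> j < M \<Longrightarrow> i \<noteq> j \<Longrightarrow> sum (P i) (G j) \<le> \<delta>"
    and d: "\<delta> \<le> 1"
    and cnt: "real (M - 1) * \<delta> ^ s < (1 - \<delta>) ^ s"
    and i: "i < M"
  shows "\<exists>S. S \<subseteq> G i \<and> card S \<le> s \<and> (\<forall>j<M. j \<noteq> i \<longrightarrow> \<not> S \<subseteq> G j)"
proof (rule ccontr)
  assume no: "\<not> ?thesis"
  define A where "A = PiE {..<s} (\<lambda>_. G i)"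
  define w where "w g = (\<Prod>k<s. P i (g k))" for g
  define J where "J = {..<M} - {i}"
  have finG: "finite (G i)" using GT[OF i] fin finite_subset by blast
  have finA: "finite A" unfolding A_def using finG by (simp add: finite_PiE)
  have wnn: "w g \<ge> 0" if "g \<in> A" for g
    unfolding w_def using that nn[OF i] GT[OF i] unfolding A_def
    by (intro prod_nonneg) (auto simp: PiE_def Pi_def)
  have sumA: "sum w A = (sum (P i) (G i)) ^ s"
    unfolding A_def w_def
    using prod_sum_PiE[of "{..<s}" "\<lambda>_. G i" "\<lambda>_ y. P i y"] finG by simp
  have sumj: "sum w {g\<in>A. g ` {..<s} \<subseteq> G j} \<le> \<delta> ^ s" if j: "j \<in> J" for j
  proof -
    have jM: "j < M" "j \<noteq> i" using j by (auto simp: J_def)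
    have finGj: "finite (G i \<inter> G j)" using finG by simp
    have "{g\<in>A. g ` {..<s} \<subseteq> G j} = PiE {..<s} (\<lambda>_. G i \<inter> G j)"
      unfolding A_def by (auto simp: PiE_def Pi_def)
    hence "sum w {g\<in>A. g ` {..<s} \<subseteq> G j} = (sum (P i) (G i \<inter> G j)) ^ s"
      unfolding w_def
      using prod_sum_PiE[of "{..<s}" "\<lambda>_. G i \<inter> G j" "\<lambda>_ y. P i y"] finGj by simp
    also have "\<dots> \<le> \<delta> ^ s"
    proof (rule power_mono)
      have "sum (P i) (G i \<inter> G j) \<le> sum (P i) (G j)"
        apply (rule sum_mono2) using fin GT[OF jM(1)] finite_subset apply blast
        apply blast using nn[OF i] GT[OF jM(1)] by auto
      also have "\<dots> \<le> \<delta>" using e2[OF i jM(1)] jM(2) by auto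
      finally show "sum (P i) (G i \<inter> G j) \<le> \<delta>" .
      show "0 \<le> sum (P i) (G i \<inter> G j)" using nn[OF i] GT[OF i] by (intro sum_nonneg) auto
    qed
    finally show ?thesis .
  qed
  have bad: "\<forall>g\<in>A. \<exists>j\<in>J. g ` {..<s} \<subseteq> G j"
  proof
    fix g assume g: "g \<in> A"
    have "g ` {..<s} \<subseteq> G i" using g unfolding A_def by (auto simp: PiE_def Pi_def)
    moreover have "card (g ` {..<s}) \<le> s" using card_image_le[of "{..<s}" g] by simp
    ultimately obtain j where "j < M" "j \<noteq> i" "g ` {..<s} \<subseteq> G j" using no by blast
    thus "\<exists>j\<in>J. g ` {..<s} \<subseteq> G j" by (auto simp: J_def)
  qed
  have "sum w A \<le> (\<Sum>g\<in>A. \<Sum>j\<in>J. if g ` {..<s} \<subseteq> G j then w g else 0)"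
  proof (rule sum_mono)
    fix g assume g: "g \<in> A"
    then obtain j where j: "j \<in> J" "g ` {..<s} \<subseteq> G j" using bad by blast
    have finJ: "finite J" by (simp add: J_def)
    have "w g = (if g ` {..<s} \<subseteq> G j then w g else 0)" using j by simp
    also have "\<dots> \<le> (\<Sum>j\<in>J. if g ` {..<s} \<subseteq> G j then w g else 0)"
      by (rule member_le_sum) (use j finJ wnn[OF g] in auto)
    finally show "w g \<le> \<dots>" .
  qed
  also have "\<dots> = (\<Sum>j\<in>J. \<Sum>g\<in>A. if g ` {..<s} \<subseteq> G j then w g else 0)"
    by (rule sum.swap)
  also have "\<dots> = (\<Sum>j\<in>J. sum w {g\<in>A. g ` {..<s} \<subseteq> G j})"
    using finA by (simp add: sum.inter_filter)
  also have "\<dots> \<le> (\<Sum>j\<in>J. \<delta> ^ s)" by (rule sum_mono) (rule sumj)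
  also have "\<dots> = real (M - 1) * \<delta> ^ s" using i by (simp add: J_def)
  also have "\<dots> < (1 - \<delta>) ^ s" by (rule cnt)
  also have "\<dots> \<le> (sum (P i) (G i)) ^ s"
  proof (rule power_mono)
    have "sum (P i) T = sum (P i) (G i) + sum (P i) (T - G i)"
      using fin GT[OF i] by (metis add.commute sum.subset_diff)
    thus "1 - \<delta> \<le> sum (P i) (G i)" using sum1[OF i] e1[OF i] by linarith
    show "0 \<le> 1 - \<delta>" using d by simp
  qed
  also have "\<dots> = sum w A" by (rule sumA[symmetric])
  finally show False by simp
qed

lemma core:
  fixes T :: "'a set" and P :: "nat \<Rightarrow> 'a \<Rightarrow> real" and G :: "nat \<Rightarrow> 'a set"
  assumes fin: "finite T"
    and nn: "\<And>i t. i < M \<Longrightarrow> t \<in> T \<Longrightarrow> P i t \<ge> 0"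
    and sum1: "\<And>i. i < M \<Longrightarrow> sum (P i) T = 1"
    and GT: "\<And>i. i < M \<Longrightarrow> G i \<subseteq> T"
    and e1: "\<And>i. i < M \<Longrightarrow> sum (P i) (T - G i) \<le> \<delta>"
    and e2: "\<And>i j. i < M \<Longrightarrow> j < M \<Longrightarrow> i \<noteq> j \<Longrightarrow> sum (P i) (G j) \<le> \<delta>"
    and d: "\<delta> \<le> 1"
    and cnt: "real (M - 1) * \<delta> ^ s < (1 - \<delta>) ^ s"
  shows "M \<le> card {S. S \<subseteq> T \<and> card S \<le> s}"
proof -
  define F where "F i = (SOME S. S \<subseteq> G i \<and> card S \<le> s \<and> (\<forall>j<M. j \<noteq> i \<longrightarrow> \<not> S \<subseteq> G j))" for i
  have F: "F i \<subseteq> G i \<and> card (F i) \<le> s \<and> (\<forall>j<M. j \<noteq> i \<longrightarrow> \<not> F i \<subseteq> G j)" if "i < M" for i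
    unfolding F_def by (rule someI_ex) (rule core_exists[OF assms that])
  have "inj_on F {..<M}"
  proof (rule inj_onI)
    fix i j assume ij: "i \<in> {..<M}" "j \<in> {..<M}" "F i = F j"
    show "i = j"
    proof (rule ccontr)
      assume "i \<noteq> j"
      with F[of i] F[of j] ij show False by auto
    qed
  qed
  moreover have "F ` {..<M} \<subseteq> {S. S \<subseteq> T \<and> card S \<le> s}" using F GT by blast
  moreover have "finite {S. S \<subseteq> T \<and> card S \<le> s}" using fin by simp
  ultimately show ?thesis using card_inj_on_le[of F "{..<M}"] by simp
qed




lemma pow_fact_le_exp:
  fixes x :: real assumes "x \<ge> 0"
  shows "x ^ s / fact s \<le> exp x"
proof -
  have sm: "summable (\<lambda>n. x ^ n /\<^sub>R fact n)" using exp_converges sums_summable by blast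
  have "sum (\<lambda>n. x ^ n /\<^sub>R fact n) {s} \<le> suminf (\<lambda>n. x ^ n /\<^sub>R fact n)"
    by (rule sum_le_suminf[OF sm]) (use assms in auto)
  also have "\<dots> = exp x" using exp_converges sums_unique by metis
  finally show ?thesis by (simp add: divide_inverse mult.commute)
qed

lemma fact_lower: "(real s / exp 1) ^ s \<le> fact s"
proof -
  have "real s ^ s / fact s \<le> exp (real s)" by (rule pow_fact_le_exp) simp
  also have "exp (real s) = exp 1 ^ s" by (simp add: exp_of_nat_mult[symmetric])
  finally have "real s ^ s \<le> exp 1 ^ s * fact s" by (simp add: field_simps)
  thus ?thesis by (simp add: power_divide field_simps)
qed

lemma pow_div_fact_mono:
  assumes "k \<le> s" "s \<le> K"
  shows "real K ^ k / fact k \<le> real K ^ s / fact s"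
  using assms
proof (induction s)
  case 0 thus ?case by simp
next
  case (Suc s)
  show ?case
  proof (cases "k = Suc s")
    case True thus ?thesis by simp
  next
    case False
    hence "k \<le> s" using Suc by simp
    hence "real K ^ k / fact k \<le> real K ^ s / fact s" using Suc by simp
    also have "\<dots> \<le> real K ^ s / fact s * (real K / real (Suc s))"
    proof -
      have "1 \<le> real K / real (Suc s)" using Suc.prems by simp
      moreover have "0 \<le> real K ^ s / fact s" by simp
      ultimately show ?thesis by (metis mult_le_cancel_left1 mult.commute order.refl mult_right_mono mult_1_right)
    qed
    also have "\<dots> = real K ^ Suc s / fact (Suc s)" by (simp add: field_simps)
    finally show ?thesis .
  qed
qed

lemma card_small_subsets:
  assumes fin: "finite T" and TK: "card T \<le> K" and s: "1 \<le> s" "s \<le> K"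
  shows "real (card {S. S \<subseteq> T \<and> card S \<le> s}) \<le> real (s + 1) * (exp 1 * real K / real s) ^ s"
proof -
  have eq: "{S. S \<subseteq> T \<and> card S \<le> s} = (\<Union>k\<in>{..s}. {S. S \<subseteq> T \<and> card S = k})" by auto
  have "card {S. S \<subseteq> T \<and> card S \<le> s} \<le> (\<Sum>k\<le>s. card {S. S \<subseteq> T \<and> card S = k})"
    unfolding eq by (rule card_UN_le) simp
  also have "\<dots> = (\<Sum>k\<le>s. card T choose k)" using n_subsets[OF fin] by simp
  finally have "real (card {S. S \<subseteq> T \<and> card S \<le> s}) \<le> (\<Sum>k\<le>s. real (card T choose k))"
    by (metis of_nat_le_iff of_nat_sum)
  also have "\<dots> \<le> (\<Sum>k\<le>s. real K ^ s / fact s)"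
  proof (rule sum_mono)
    fix k assume k: "k \<in> {..s}"
    have "(card T choose k) * fact k \<le> card T ^ k" by (rule binomial_fact_pow)
    also have "\<dots> \<le> K ^ k" using TK by (simp add: power_mono)
    finally have "real (card T choose k) * fact k \<le> real K ^ k"
      by (metis of_nat_fact of_nat_le_iff of_nat_mult of_nat_power)
    hence "real (card T choose k) \<le> real K ^ k / fact k" by (simp add: field_simps)
    also have "\<dots> \<le> real K ^ s / fact s" using k s by (intro pow_div_fact_mono) auto
    finally show "real (card T choose k) \<le> real K ^ s / fact s" .
  qed
  also have "\<dots> = real (s+1) * (real K ^ s / fact s)" by simp
  also have "\<dots> \<le> real (s+1) * (real K ^ s / (real s / exp 1) ^ s)"
  proof (intro mult_left_mono divide_left_mono)
    show "(real s / exp 1) ^ s \<le> fact s" by (rule fact_lower)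
    show "0 < fact s * (real s / exp 1) ^ s" using s by simp
  qed auto
  also have "\<dots> = real (s + 1) * (exp 1 * real K / real s) ^ s"
    by (simp add: power_divide power_mult_distrib field_simps)
  finally show ?thesis .
qed




lemma code_bound:
  assumes code: "is_ID_code q n l M Q D"
    and e1: "\<And>i. i < M' \<Longrightarrow> err_not_to q n l Q D i \<le> \<epsilon>"
    and e2: "\<And>i j. i < M' \<Longrightarrow> j < M' \<Longrightarrow> i \<noteq> j \<Longrightarrow> err_to q n l Q D i j \<le> \<epsilon>"
    and MM: "M' \<le> M"
    and d: "2 * \<epsilon> \<le> 1"
    and cnt: "real (M' - 1) * (2 * \<epsilon>) ^ s < (1 - 2 * \<epsilon>) ^ s"
  shows "M' \<le> card {S. S \<subseteq> (\<lambda>ys. map mset ys) ` blocks q n l \<and> card S \<le> s}"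
proof -
  define B where "B = blocks q n l"
  define \<tau> where "\<tau> ys = map mset ys" for ys :: "nat list list"
  define T where "T = \<tau> ` B"
  define F where "F t = {ys\<in>B. \<tau> ys = t}" for t
  define p where "p i ys = (\<Sum>xs\<in>B. Q i xs * prod_channel n l ys xs)" for i ys
  define P where "P i t = sum (p i) (F t)" for i t
  define r where "r E t = real (card (E \<inter> F t)) / real (card (F t))" for E t
  define G where "G j = {t\<in>T. real (card (F t)) \<le> 2 * real (card (D j \<inter> F t))}" for j
  have finB: "finite B" by (simp add: B_def finite_blocks)
  have finT: "finite T" using finB by (simp add: T_def)
  have Qnn: "Q i xs \<ge> 0" if "i < M" "xs \<in> B" for i xs
    using code that by (auto simp: is_ID_code_def B_def)
  have Q1: "sum (Q i) B = 1" if "i < M" for i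
    using code that by (auto simp: is_ID_code_def B_def)
  have DB: "D i \<subseteq> B" if "i < M" for i
    using code that by (auto simp: is_ID_code_def B_def)
  have pnn: "p i ys \<ge> 0" if "i < M" for i ys
    unfolding p_def using Qnn[OF that] prod_channel_nonneg by (intro sum_nonneg mult_nonneg_nonneg) auto
  have psum: "(\<Sum>ys\<in>E. p i ys) = (\<Sum>xs\<in>B. Q i xs * (\<Sum>ys\<in>E. prod_channel n l ys xs))" for i E
    unfolding p_def by (simp add: sum_distrib_left sum.swap[of _ E])
  have p1: "sum (p i) B = 1" if "i < M" for i
  proof -
    have "sum (p i) B = (\<Sum>xs\<in>B. Q i xs * 1)"
      unfolding psum B_def using prod_channel_sum by (intro sum.cong refl) auto
    thus ?thesis using Q1[OF that] by simp
  qed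
  have pconst: "p i ys = p i ys'" if "ys \<in> B" "ys' \<in> B" "\<tau> ys = \<tau> ys'" for i ys ys'
    unfolding p_def using prod_channel_type[of ys q n l ys'] that
    by (intro sum.cong refl) (auto simp: B_def \<tau>_def)
  have Pnn: "P i t \<ge> 0" if "i < M" for i t
    unfolding P_def using pnn[OF that] by (intro sum_nonneg) auto
  have groupE: "(\<Sum>ys\<in>E. p i ys) = (\<Sum>t\<in>T. sum (p i) (E \<inter> F t))" if "E \<subseteq> B" for E i
  proof -
    have "(\<Sum>t\<in>T. sum (p i) {ys. ys \<in> E \<and> \<tau> ys = t}) = sum (p i) E"
      by (rule sum.group) (use that finB finT in \<open>auto simp: T_def intro: finite_subset\<close>)
    moreover have "{ys. ys \<in> E \<and> \<tau> ys = t} = E \<inter> F t" for t using that by (auto simp: F_def)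
    ultimately show ?thesis by simp
  qed
  have ratio: "sum (p i) (E \<inter> F t) = P i t * r E t" if "E \<subseteq> B" "t \<in> T" for E i t
  proof -
    obtain y0 where y0: "y0 \<in> B" "\<tau> y0 = t" using \<open>t \<in> T\<close> by (auto simp: T_def)
    have finF: "finite (F t)" using finB by (simp add: F_def)
    have c: "p i ys = p i y0" if "ys \<in> F t" for ys
      using pconst[of ys y0 i] that y0 by (auto simp: F_def)
    have pos: "card (F t) > 0" using y0 finF by (auto simp: F_def card_gt_0_iff)
    have "sum (p i) (E \<inter> F t) = real (card (E \<inter> F t)) * p i y0"
      using c by simp
    moreover have "P i t = real (card (F t)) * p i y0" unfolding P_def using c by simp
    ultimately show ?thesis using pos unfolding r_def by (simp add: field_simps)
  qed
  have errE: "(\<Sum>ys\<in>E. p i ys) = (\<Sum>t\<in>T. P i t * r E t)" if "E \<subseteq> B" for E i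
    using groupE[OF that] ratio[OF that] by simp
  have rnn: "r E t \<ge> 0" for E t unfolding r_def by simp
  have FB: "F t \<subseteq> B" for t by (auto simp: F_def)
  have finF: "finite (F t)" for t using finB FB finite_subset by blast
  have Fpos: "card (F t) > 0" if tT: "t \<in> T" for t
  proof -
    obtain y0 where "y0 \<in> B" "\<tau> y0 = t" using tT by (auto simp: T_def)
    thus ?thesis using finF[of t] by (auto simp: F_def card_gt_0_iff)
  qed
  have "M' \<le> card {S. S \<subseteq> T \<and> card S \<le> s}"
  proof (rule core[where P=P and G=G and \<delta>="2*\<epsilon>"])
    show "finite T" by (rule finT)
    show "\<And>i t. i < M' \<Longrightarrow> t \<in> T \<Longrightarrow> P i t \<ge> 0" using Pnn MM by simp
    show "sum (P i) T = 1" if i: "i < M'" for i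
    proof -
      have "sum (P i) T = (\<Sum>t\<in>T. sum (p i) (B \<inter> F t))" unfolding P_def
        by (intro sum.cong refl) (auto simp: F_def intro: arg_cong[where f="sum (p i)"])
      also have "\<dots> = sum (p i) B" using groupE[of B i] by simp
      finally show ?thesis using p1 i MM by simp
    qed
    show "\<And>i. i < M' \<Longrightarrow> G i \<subseteq> T" by (auto simp: G_def)
    show "sum (P i) (T - G i) \<le> 2 * \<epsilon>" if i: "i < M'" for i
    proof -
      have iM: "i < M" using i MM by simp
      have half: "1 \<le> 2 * r (B - D i) t" if t: "t \<in> T - G i" for t
      proof -
        have eq: "(B - D i) \<inter> F t = F t - (D i \<inter> F t)" using FB[of t] by auto
        have "card ((B - D i) \<inter> F t) = card (F t) - card (D i \<inter> F t)"
          unfolding eq by (rule card_Diff_subset) (use finF[of t] in auto)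
        moreover have "card (D i \<inter> F t) \<le> card (F t)" by (rule card_mono) (use finF[of t] in auto)
        ultimately have "real (card ((B - D i) \<inter> F t)) = real (card (F t)) - real (card (D i \<inter> F t))"
          by simp
        moreover have "2 * real (card (D i \<inter> F t)) < real (card (F t))" using t by (auto simp: G_def)
        moreover have "real (card (F t)) > 0" using Fpos t by simp
        ultimately show ?thesis unfolding r_def by (simp add: field_simps)
      qed
      have "sum (P i) (T - G i) \<le> (\<Sum>t\<in>T - G i. 2 * (P i t * r (B - D i) t))"
      proof (rule sum_mono)
        fix t assume t: "t \<in> T - G i"
        have "P i t * 1 \<le> P i t * (2 * r (B - D i) t)"
          by (rule mult_left_mono[OF half[OF t] Pnn[OF iM]])
        thus "P i t \<le> 2 * (P i t * r (B - D i) t)" by simp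
      qed
      also have "\<dots> \<le> (\<Sum>t\<in>T. 2 * (P i t * r (B - D i) t))"
        by (rule sum_mono2) (use finT Pnn[OF iM] rnn in auto)
      also have "\<dots> = 2 * (\<Sum>ys\<in>B - D i. p i ys)"
        using errE[of "B - D i" i] by (simp add: sum_distrib_left)
      also have "(\<Sum>ys\<in>B - D i. p i ys) = err_not_to q n l Q D i"
        unfolding err_not_to_def psum B_def ..
      finally show ?thesis using e1[OF i] by simp
    qed
    show "sum (P i) (G j) \<le> 2 * \<epsilon>" if ij: "i < M'" "j < M'" "i \<noteq> j" for i j
    proof -
      have iM: "i < M" "j < M" using ij MM by auto
      have half: "1 \<le> 2 * r (D j) t" if t: "t \<in> G j" for t
      proof -
        have "real (card (F t)) \<le> 2 * real (card (D j \<inter> F t))" using t by (auto simp: G_def)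
        moreover have "real (card (F t)) > 0" using Fpos t by (simp add: G_def)
        ultimately show ?thesis unfolding r_def by (simp add: field_simps)
      qed
      have "sum (P i) (G j) \<le> (\<Sum>t\<in>G j. 2 * (P i t * r (D j) t))"
      proof (rule sum_mono)
        fix t assume t: "t \<in> G j"
        have "P i t * 1 \<le> P i t * (2 * r (D j) t)"
          by (rule mult_left_mono[OF half[OF t] Pnn[OF iM(1)]])
        thus "P i t \<le> 2 * (P i t * r (D j) t)" by simp
      qed
      also have "\<dots> \<le> (\<Sum>t\<in>T. 2 * (P i t * r (D j) t))"
        by (rule sum_mono2) (use finT Pnn[OF iM(1)] rnn in \<open>auto simp: G_def\<close>)
      also have "\<dots> = 2 * (\<Sum>ys\<in>D j. p i ys)"
        using errE[OF DB[OF iM(2)], of i] by (simp add: sum_distrib_left)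
      also have "(\<Sum>ys\<in>D j. p i ys) = err_to q n l Q D i j"
        unfolding err_to_def psum B_def ..
      finally show ?thesis using e2[OF ij] by simp
    qed
    show "2 * \<epsilon> \<le> 1" by (rule d)
    show "real (M' - 1) * (2 * \<epsilon>) ^ s < (1 - 2 * \<epsilon>) ^ s" by (rule cnt)
  qed
  thus ?thesis unfolding T_def \<tau>_def B_def .
qed




lemma floor_half:
  fixes y :: real assumes "y \<ge> 1"
  shows "real (nat \<lfloor>y\<rfloor>) \<ge> y / 2" "real (nat \<lfloor>y\<rfloor>) \<le> y" "nat \<lfloor>y\<rfloor> \<ge> 1"
proof -
  have f: "real (nat \<lfloor>y\<rfloor>) = of_int \<lfloor>y\<rfloor>" using assms by simp
  show "real (nat \<lfloor>y\<rfloor>) \<ge> y / 2"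
  proof (cases "y < 2")
    case True
    hence "\<lfloor>y\<rfloor> = 1" using assms by (simp add: floor_eq_iff)
    thus ?thesis using True f by simp
  next
    case False
    have "of_int \<lfloor>y\<rfloor> > y - 1" by linarith
    thus ?thesis using False f by linarith
  qed
  show "real (nat \<lfloor>y\<rfloor>) \<le> y" using f by linarith
  show "nat \<lfloor>y\<rfloor> \<ge> 1" using assms by linarith
qed

lemma pow_bound_aux: "1 \<le> s \<Longrightarrow> real s + 2 \<le> 4 ^ s"
proof (induction s)
  case 0 thus ?case by simp
next
  case (Suc s)
  show ?case
  proof (cases "s = 0")
    case True thus ?thesis by simp
  next
    case False
    hence "real s + 2 \<le> 4 ^ s" using Suc by simp
    moreover have "(1::real) \<le> 4 ^ s" by simp
    ultimately show ?thesis by simp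
  qed
qed

lemma numeric:
  fixes n l q :: nat and \<mu> R \<gamma> :: real
  assumes q: "q \<ge> 2" and mu: "\<mu> > 0" and R: "R > 0" and g0: "\<gamma> > 0" and g1: "\<gamma> \<le> \<mu> / 2" and g2: "\<gamma> \<le> 1"
    and n2: "n \<ge> 2" and l1: "l \<ge> 1" and ln: "l * (q - 1) \<le> n"
    and E3: "4 * exp 1 ^ 2 * real n powr (- (\<mu> / 2)) \<le> 1 / 8"
    and E4: "ln (8 * exp 1 ^ 2 * real n powr \<gamma>) \<le> R * real n powr \<gamma> * ln 2"
  defines "K \<equiv> (n + 1) ^ (l * (q - 1))"
    and "\<epsilon> \<equiv> real n powr (- (real l * \<mu>))"
  shows "\<exists>s. 1 \<le> s \<and> s \<le> K \<and>
     real (s + 1) * (exp 1 * real K / real s) ^ s * (2 * \<epsilon>) ^ s < (1 - 2 * \<epsilon>) ^ s \<and>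
     real (s + 1) * (exp 1 * real K / real s) ^ s + 1 \<le> 2 powr (R * real n ^ (l * (q - 1))) \<and>
     2 * \<epsilon> \<le> 1"
proof -
  define m where "m = l * (q - 1)"
  have m1: "m \<ge> 1" using q l1 by (simp add: m_def)
  define x where "x = real n ^ m"
  define B where "B = real n powr \<gamma>"
  define s where "s = nat \<lfloor>x / B\<rfloor>"
  define a where "a = 2 * exp 1 ^ 2 * B"
  have rn: "real n \<ge> 2" using n2 by simp
  have B1: "B \<ge> 1" unfolding B_def using rn g0 by (simp add: ge_one_powr_ge_zero)
  have Bn: "B \<le> real n" unfolding B_def using rn g2 powr_mono[of \<gamma> 1 "real n"] by simp
  have xn: "x \<ge> real n" unfolding x_def using rn m1
    by (metis power_increasing power_one_right one_le_numeral order_trans)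
  have xB: "x / B \<ge> 1" using B1 Bn xn by (simp add: field_simps)
  have s1: "s \<ge> 1" and sle: "real s \<le> x / B" and sge: "real s \<ge> x / B / 2"
    using floor_half[OF xB] by (simp_all add: s_def)
  have Kx: "real K \<le> exp 1 * x"
  proof -
    have "real K = (real n + 1) ^ m" by (simp add: K_def m_def add.commute)
    also have "\<dots> = x * (1 + 1 / real n) ^ m" unfolding x_def using rn
      by (simp add: power_mult_distrib[symmetric] field_simps)
    also have "(1 + 1 / real n) ^ m \<le> exp (1 / real n) ^ m"
      by (rule power_mono) (auto simp: exp_ge_add_one_self_aux add.commute)
    also have "\<dots> = exp (real m / real n)" by (simp add: exp_of_nat_mult[symmetric])
    also have "\<dots> \<le> exp 1"
    proof -
      have "real m \<le> real n" using ln unfolding m_def by linarith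
      thus ?thesis using rn by simp
    qed
    finally show ?thesis using xn rn by (simp add: mult.commute mult_left_mono)
  qed
  have xK: "x \<le> real K"
  proof -
    have "x = real (n ^ m)" by (simp add: x_def)
    also have "\<dots> \<le> real K" unfolding K_def m_def[symmetric] by (simp add: power_mono)
    finally show ?thesis .
  qed
  have sK: "s \<le> K"
  proof -
    have "x / B \<le> x" using B1 xn rn by (simp add: divide_le_eq mult_le_cancel_left1)
    hence "real s \<le> real K" using sle xK by linarith
    thus ?thesis by simp
  qed
  have spos: "real s > 0" using s1 by simp
  have e0: "exp (1::real) \<ge> 1" by simp
  have a1: "a \<ge> 1"
  proof -
    have "(1::real) \<le> exp 1 ^ 2" using e0 by (simp add: one_le_power)
    hence "1 * 1 \<le> exp 1 ^ 2 * B" using B1 by (intro mult_mono) auto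
    thus ?thesis unfolding a_def by simp
  qed
  have xs: "x / real s \<le> 2 * B" using sge spos B1 by (simp add: field_simps)
  have eKs: "exp 1 * real K / real s \<le> a"
  proof -
    have "exp 1 * real K / real s \<le> exp 1 * (exp 1 * x) / real s"
      using Kx spos by (simp add: divide_right_mono)
    also have "\<dots> = exp 1 ^ 2 * (x / real s)" by (simp add: power2_eq_square)
    also have "\<dots> \<le> exp 1 ^ 2 * (2 * B)" using xs by (intro mult_left_mono) auto
    finally show ?thesis by (simp add: a_def)
  qed
  have Ua: "real (s + 1) * (exp 1 * real K / real s) ^ s \<le> real (s + 1) * a ^ s"
    by (intro mult_left_mono power_mono eKs) (use spos in auto)
  have eps0: "\<epsilon> \<ge> 0" by (simp add: \<epsilon>_def)
  have Beps: "B * \<epsilon> \<le> real n powr (- (\<mu> / 2))"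
  proof -
    have "B * \<epsilon> = real n powr (\<gamma> - real l * \<mu>)" unfolding B_def \<epsilon>_def using rn
      by (simp add: powr_add[symmetric])
    also have "\<dots> \<le> real n powr (- (\<mu> / 2))"
    proof (rule powr_mono)
      have "real l * \<mu> \<ge> \<mu>" using l1 mu by simp
      thus "\<gamma> - real l * \<mu> \<le> - (\<mu> / 2)" using g1 by linarith
    qed (use rn in auto)
    finally show ?thesis .
  qed
  have ad: "a * (2 * \<epsilon>) \<le> 1 / 8"
  proof -
    have "a * (2 * \<epsilon>) = 4 * exp 1 ^ 2 * (B * \<epsilon>)" by (simp add: a_def)
    also have "\<dots> \<le> 4 * exp 1 ^ 2 * real n powr (- (\<mu> / 2))" using Beps by simp
    finally show ?thesis using E3 by linarith
  qed
  have d8: "2 * \<epsilon> \<le> 1 / 8"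
  proof -
    have "2 * \<epsilon> \<le> a * (2 * \<epsilon>)" using a1 eps0 by (simp add: mult_le_cancel_right1)
    thus ?thesis using ad by linarith
  qed
  have cnt: "real (s + 1) * (exp 1 * real K / real s) ^ s * (2 * \<epsilon>) ^ s < (1 - 2 * \<epsilon>) ^ s"
  proof -
    have "real (s + 1) * (exp 1 * real K / real s) ^ s * (2 * \<epsilon>) ^ s
          \<le> real (s + 1) * a ^ s * (2 * \<epsilon>) ^ s"
      using Ua eps0 by (simp add: mult_right_mono)
    also have "\<dots> = real (s + 1) * (a * (2 * \<epsilon>)) ^ s" by (simp add: power_mult_distrib)
    also have "\<dots> \<le> real (s + 1) * (1 / 8) ^ s"
      by (intro mult_left_mono power_mono ad) (use a1 eps0 in auto)
    also have "\<dots> < (1 / 2) ^ s"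
    proof -
      have "real s + 2 \<le> 4 ^ s" by (rule pow_bound_aux[OF s1])
      hence "real (s + 1) < 4 ^ s" by simp
      hence "real (s + 1) * (1 / 8) ^ s < 4 ^ s * (1 / 8) ^ s" by simp
      also have "4 ^ s * (1 / 8) ^ s = ((1::real) / 2) ^ s" by (simp add: power_mult_distrib[symmetric])
      finally show ?thesis .
    qed
    also have "\<dots> \<le> (1 - 2 * \<epsilon>) ^ s" by (rule power_mono) (use d8 in auto)
    finally show ?thesis .
  qed
  have size: "real (s + 1) * (exp 1 * real K / real s) ^ s + 1 \<le> 2 powr (R * real n ^ (l * (q - 1)))"
  proof -
    have as1: "a ^ s \<ge> 1" using a1 by (simp add: one_le_power)
    have eq4: "4 * a = 8 * exp 1 ^ 2 * B" by (simp add: a_def)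
    have "real (s + 1) * (exp 1 * real K / real s) ^ s + 1 \<le> real (s + 1) * a ^ s + a ^ s"
      using Ua as1 by linarith
    also have "\<dots> = (real s + 2) * a ^ s" by (simp add: distrib_right)
    also have "\<dots> \<le> 4 ^ s * a ^ s" by (rule mult_right_mono[OF pow_bound_aux[OF s1]]) (use as1 in auto)
    also have "\<dots> = (8 * exp 1 ^ 2 * B) ^ s" unfolding eq4[symmetric] by (rule power_mult_distrib[symmetric])
    also have "\<dots> = exp (real s * ln (8 * exp 1 ^ 2 * B))"
    proof -
      have pos: "8 * exp 1 ^ 2 * B > 0" using B1 by simp
      have "exp (real s * ln (8 * exp 1 ^ 2 * B)) = exp (ln (8 * exp 1 ^ 2 * B)) ^ s"
        by (rule exp_of_nat_mult)
      thus ?thesis using pos by simp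
    qed
    also have "\<dots> \<le> exp (x / B * (R * B * ln 2))"
    proof -
      have l0: "ln (8 * exp 1 ^ 2 * B) \<ge> 0"
      proof -
        have "(1::real) \<le> 8 * exp 1 ^ 2 * B" using a1 unfolding a_def by simp
        thus ?thesis by simp
      qed
      have "real s * ln (8 * exp 1 ^ 2 * B) \<le> x / B * ln (8 * exp 1 ^ 2 * B)"
        by (rule mult_right_mono[OF sle l0])
      also have "\<dots> \<le> x / B * (R * B * ln 2)"
      proof (rule mult_left_mono)
        show "ln (8 * exp 1 ^ 2 * B) \<le> R * B * ln 2" using E4 unfolding B_def .
        show "0 \<le> x / B" using xB by linarith
      qed
      finally show ?thesis by simp
    qed
    also have "x / B * (R * B * ln 2) = R * x * ln 2" using B1 by (simp add: field_simps)
    also have "exp (R * x * ln 2) = 2 powr (R * x)" by (simp add: powr_def mult.commute)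
    finally show ?thesis unfolding x_def m_def .
  qed
  show ?thesis using s1 sK cnt size d8 by (intro exI[of _ s]) simp
qed




lemma one_instance:
  fixes q n l M :: nat and \<mu> R \<gamma> :: real and Q D
  assumes q: "q \<ge> 2" and mu: "\<mu> > 0" and R: "R > 0" and g0: "\<gamma> > 0" and g1: "\<gamma> \<le> \<mu> / 2" and g2: "\<gamma> \<le> 1"
    and n2: "n \<ge> 2" and ln: "l * (q - 1) \<le> n"
    and E3: "4 * exp 1 ^ 2 * real n powr (- (\<mu> / 2)) \<le> 1 / 8"
    and E4: "ln (8 * exp 1 ^ 2 * real n powr \<gamma>) \<le> R * real n powr \<gamma> * ln 2"
    and code: "is_ID_code q n l M Q D"
    and Mbig: "real M \<ge> 2 powr (R * real n ^ (l * (q - 1)))"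
    and t1: "type1_err q n l M Q D < real n powr (- (real l * \<mu>))"
    and t2: "type2_err q n l M Q D < real n powr (- (real l * \<mu>))"
  shows False
proof -
  define K where "K = (n + 1) ^ (l * (q - 1))"
  define \<epsilon> where "\<epsilon> = real n powr (- (real l * \<mu>))"
  have l1: "l \<ge> 1" using code by (simp add: is_ID_code_def)
  obtain s where s1: "1 \<le> s" and sK: "s \<le> K"
    and cnt: "real (s + 1) * (exp 1 * real K / real s) ^ s * (2 * \<epsilon>) ^ s < (1 - 2 * \<epsilon>) ^ s"
    and size: "real (s + 1) * (exp 1 * real K / real s) ^ s + 1 \<le> 2 powr (R * real n ^ (l * (q - 1)))"
    and d: "2 * \<epsilon> \<le> 1"
    using numeric[OF q mu R g0 g1 g2 n2 l1 ln E3 E4] unfolding K_def \<epsilon>_def by blast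
  define T where "T = (\<lambda>ys. map mset ys) ` blocks q n l"
  define N where "N = card {S. S \<subseteq> T \<and> card S \<le> s}"
  define U where "U = real (s + 1) * (exp 1 * real K / real s) ^ s"
  have NU: "real N \<le> U" unfolding N_def U_def
    by (rule card_small_subsets[OF _ _ s1 sK]) (use card_types[of q n l] q in \<open>auto simp: T_def K_def finite_blocks\<close>)
  have NM: "N + 1 \<le> M"
  proof -
    have "real (N + 1) \<le> real M" using NU size Mbig unfolding U_def by simp
    thus ?thesis by linarith
  qed
  have eps0: "\<epsilon> \<ge> 0" by (simp add: \<epsilon>_def)
  have "N + 1 \<le> card {S. S \<subseteq> (\<lambda>ys. map mset ys) ` blocks q n l \<and> card S \<le> s}"
  proof (rule code_bound[OF code, where \<epsilon> = \<epsilon>])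
    show "err_not_to q n l Q D i \<le> \<epsilon>" if i: "i < N + 1" for i
    proof -
      have iM: "i < M" using i NM by simp
      have "err_not_to q n l Q D i \<le> type1_err q n l M Q D"
        unfolding type1_err_def
      proof (rule Max_ge)
        have "{err_not_to q n l Q D i | i. i < M} = (\<lambda>i. err_not_to q n l Q D i) ` {..<M}" by auto
        thus "finite {err_not_to q n l Q D i | i. i < M}" by simp
        show "err_not_to q n l Q D i \<in> {err_not_to q n l Q D i | i. i < M}" using iM by blast
      qed
      thus ?thesis using t1 unfolding \<epsilon>_def by simp
    qed
    show "err_to q n l Q D i j \<le> \<epsilon>" if ij: "i < N + 1" "j < N + 1" "i \<noteq> j" for i j
    proof -
      have iM: "i < M" "j < M" using ij NM by auto
      have "err_to q n l Q D i j \<le> type2_err q n l M Q D"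
        unfolding type2_err_def
      proof (rule Max_ge)
        have "{err_to q n l Q D i j | i j. i < M \<and> j < M \<and> i \<noteq> j}
              \<subseteq> (\<lambda>(i, j). err_to q n l Q D i j) ` ({..<M} \<times> {..<M})" by auto
        thus "finite {err_to q n l Q D i j | i j. i < M \<and> j < M \<and> i \<noteq> j}"
          by (rule finite_subset) simp
        show "err_to q n l Q D i j \<in> {err_to q n l Q D i j | i j. i < M \<and> j < M \<and> i \<noteq> j}"
          using iM ij(3) by blast
      qed
      thus ?thesis using t2 unfolding \<epsilon>_def by simp
    qed
    show "N + 1 \<le> M" by (rule NM)
    show "2 * \<epsilon> \<le> 1" by (rule d)
    have "real (N + 1 - 1) * (2 * \<epsilon>) ^ s \<le> U * (2 * \<epsilon>) ^ s"
      using NU eps0 by (simp add: mult_right_mono)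
    also have "\<dots> < (1 - 2 * \<epsilon>) ^ s" using cnt unfolding U_def .
    finally show "real (N + 1 - 1) * (2 * \<epsilon>) ^ s < (1 - 2 * \<epsilon>) ^ s" .
  qed
  thus False unfolding N_def T_def by simp
qed

theorem theorem2:
  fixes q :: nat and \<mu> R :: real
  assumes "q \<ge> 2" and "\<mu> > 0" and "R > 0"
  shows "\<not> (\<exists>(n :: nat \<Rightarrow> nat) (l :: nat \<Rightarrow> nat) (M :: nat \<Rightarrow> nat)
              (Q :: nat \<Rightarrow> nat \<Rightarrow> nat list list \<Rightarrow> real) (D :: nat \<Rightarrow> nat \<Rightarrow> nat list list set).
     filterlim n at_top sequentially \<and>
     (\<lambda>i. real (l i) / real (n i)) \<longlonglongrightarrow> 0 \<and>
     (\<forall>i. is_ID_code q (n i) (l i) (M i) (Q i) (D i) \<and>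
          real (M i) \<ge> 2 powr (R * real (n i) ^ (l i * (q - 1))) \<and>
          type1_err q (n i) (l i) (M i) (Q i) (D i) < real (n i) powr (- (real (l i) * \<mu>)) \<and>
          type2_err q (n i) (l i) (M i) (Q i) (D i) < real (n i) powr (- (real (l i) * \<mu>))))"
proof
  assume "\<exists>(n :: nat \<Rightarrow> nat) (l :: nat \<Rightarrow> nat) (M :: nat \<Rightarrow> nat)
              (Q :: nat \<Rightarrow> nat \<Rightarrow> nat list list \<Rightarrow> real) (D :: nat \<Rightarrow> nat \<Rightarrow> nat list list set).
     filterlim n at_top sequentially \<and>
     (\<lambda>i. real (l i) / real (n i)) \<longlonglongrightarrow> 0 \<and>
     (\<forall>i. is_ID_code q (n i) (l i) (M i) (Q i) (D i) \<and>
          real (M i) \<ge> 2 powr (R * real (n i) ^ (l i * (q - 1))) \<and>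
          type1_err q (n i) (l i) (M i) (Q i) (D i) < real (n i) powr (- (real (l i) * \<mu>)) \<and>
          type2_err q (n i) (l i) (M i) (Q i) (D i) < real (n i) powr (- (real (l i) * \<mu>)))"
  then obtain n l M Q D where hn: "filterlim n at_top sequentially"
    and hl: "(\<lambda>i. real (l i) / real (n i)) \<longlonglongrightarrow> 0"
    and H: "\<And>i. is_ID_code q (n i) (l i) (M i) (Q i) (D i) \<and>
          real (M i) \<ge> 2 powr (R * real (n i) ^ (l i * (q - 1))) \<and>
          type1_err q (n i) (l i) (M i) (Q i) (D i) < real (n i) powr (- (real (l i) * \<mu>)) \<and>
          type2_err q (n i) (l i) (M i) (Q i) (D i) < real (n i) powr (- (real (l i) * \<mu>))"
    by blast
  have q: "q \<ge> 2" and mu: "\<mu> > 0" and R: "R > 0" using assms by auto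
  define \<gamma> where "\<gamma> = min \<mu> 1 / 2"
  have g0: "\<gamma> > 0" and g1: "\<gamma> \<le> \<mu> / 2" and g2: "\<gamma> \<le> 1" using mu by (auto simp: \<gamma>_def)
  have rn: "filterlim (\<lambda>i. real (n i)) at_top sequentially"
    by (rule filterlim_compose[OF filterlim_real_sequentially hn])
  have ev1: "eventually (\<lambda>i. 2 \<le> n i) sequentially" using hn by (simp add: filterlim_at_top)
  have ev2': "eventually (\<lambda>i. real (l i) / real (n i) < 1 / real (q - 1)) sequentially"
    by (rule order_tendstoD(2)[OF hl]) (use q in simp)
  have ev2: "eventually (\<lambda>i. l i * (q - 1) \<le> n i) sequentially"
    using ev1 ev2'
  proof eventually_elim
    case (elim i)
    have np: "real (n i) > 0" using elim(1) by simp
    have qp: "real (q - 1) > 0" using q by simp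
    have "real (l i) < real (n i) / real (q - 1)" using elim(2) np qp by (simp add: field_simps)
    hence "real (l i) * real (q - 1) < real (n i)" using qp by (simp add: field_simps)
    hence "real (l i * (q - 1)) < real (n i)" by simp
    thus ?case by linarith
  qed
  have lim3: "((\<lambda>i. real (n i) powr (- (\<mu> / 2))) \<longlongrightarrow> 0) sequentially"
    by (rule tendsto_neg_powr[OF _ rn]) (use mu in simp)
  have ev3': "eventually (\<lambda>i. real (n i) powr (- (\<mu> / 2)) < 1 / (32 * exp 1 ^ 2)) sequentially"
    by (rule order_tendstoD(2)[OF lim3]) simp
  have ev3: "eventually (\<lambda>i. 4 * exp 1 ^ 2 * real (n i) powr (- (\<mu> / 2)) \<le> 1 / 8) sequentially"
    using ev3'
  proof eventually_elim
    case (elim i)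
    have "4 * exp 1 ^ 2 * real (n i) powr (- (\<mu> / 2)) \<le> 4 * exp 1 ^ 2 * (1 / (32 * exp 1 ^ 2))"
      using elim by (intro mult_left_mono) auto
    also have "\<dots> = 1 / 8" by simp
    finally show ?case .
  qed
  have lim4: "((\<lambda>y::real. ln (8 * exp 1 ^ 2 * y) / y) \<longlongrightarrow> 0) at_top" by real_asymp
  have ev4y: "eventually (\<lambda>y::real. ln (8 * exp 1 ^ 2 * y) \<le> R * y * ln 2) at_top"
  proof -
    have ev: "eventually (\<lambda>y::real. ln (8 * exp 1 ^ 2 * y) / y < R * ln 2) at_top"
      by (rule order_tendstoD(2)[OF lim4]) (use R in simp)
    show ?thesis using ev eventually_gt_at_top[of "0::real"]
  proof eventually_elim
    case (elim y)
    hence "ln (8 * exp 1 ^ 2 * y) < R * ln 2 * y" using elim by (simp add: field_simps)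
    thus ?case by (simp add: mult.commute mult.left_commute)
  qed
  qed
  have fB: "filterlim (\<lambda>i. real (n i) powr \<gamma>) at_top sequentially"
    by (rule filterlim_compose[OF real_powr_at_top[OF g0] rn])
  have ev4: "eventually (\<lambda>i. ln (8 * exp 1 ^ 2 * real (n i) powr \<gamma>) \<le> R * real (n i) powr \<gamma> * ln 2) sequentially"
    using eventually_compose_filterlim[OF ev4y fB] by simp
  have "eventually (\<lambda>i. 2 \<le> n i \<and> l i * (q - 1) \<le> n i \<and>
      4 * exp 1 ^ 2 * real (n i) powr (- (\<mu> / 2)) \<le> 1 / 8 \<and>
      ln (8 * exp 1 ^ 2 * real (n i) powr \<gamma>) \<le> R * real (n i) powr \<gamma> * ln 2) sequentially"
    using ev1 ev2 ev3 ev4 by eventually_elim (intro conjI)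
  then obtain N where NN: "\<forall>i\<ge>N. 2 \<le> n i \<and> l i * (q - 1) \<le> n i \<and>
      4 * exp 1 ^ 2 * real (n i) powr (- (\<mu> / 2)) \<le> 1 / 8 \<and>
      ln (8 * exp 1 ^ 2 * real (n i) powr \<gamma>) \<le> R * real (n i) powr \<gamma> * ln 2"
    unfolding eventually_sequentially by blast
  have i: "2 \<le> n N" "l N * (q - 1) \<le> n N"
      "4 * exp 1 ^ 2 * real (n N) powr (- (\<mu> / 2)) \<le> 1 / 8"
      "ln (8 * exp 1 ^ 2 * real (n N) powr \<gamma>) \<le> R * real (n N) powr \<gamma> * ln 2"
    using NN by auto
  have HN: "is_ID_code q (n N) (l N) (M N) (Q N) (D N)"
    "real (M N) \<ge> 2 powr (R * real (n N) ^ (l N * (q - 1)))"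
    "type1_err q (n N) (l N) (M N) (Q N) (D N) < real (n N) powr (- (real (l N) * \<mu>))"
    "type2_err q (n N) (l N) (M N) (Q N) (D N) < real (n N) powr (- (real (l N) * \<mu>))"
    using H[of N] by auto
  show False by (rule one_instance[OF q mu R g0 g1 g2 i HN])
qed


end
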